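(* Let $\mathbf{Y}\in\mathbb{R}^{N\times B}$, $\mathbf{R}\in\mathbb{R}^{M\times B}$, and $\mathbf{A}\in\mathbb{R}^{N\times M}$ with $\mathbf{A}^{T}\mathbf{A}$ nonsingular; let $\mathbf{A}=\mathbf{U}\boldsymbol{\Lambda}\mathbf{V}^{T}$ be a compact singular value decomposition ($\mathbf{U}\in\mathbb{R}^{N\times M}$ with orthonormal columns, $\boldsymbol{\Lambda},\mathbf{V}\in\mathbb{R}^{M\times M}$). Let $\mathbf{S}_{1},\dots,\mathbf{S}_{M}$ be $B\times B$ symmetric positive definite matrices, $\mathbf{Q}=\mathrm{blockdiag}(\mathbf{S}_{1},\dots,\mathbf{S}_{M})+\mathbf{A}^{T}\mathbf{A}\otimes\mathbf{I}_{B}$ and $\mathbf{z}=\mathrm{vec}\big((\mathbf{Y}-\mathbf{A}\mathbf{R})^{T}\mathbf{A}\big)$, and assume $\mathbf{z}\neq\mathbf{0}$. Then $$0<\mathbf{z}^{T}\mathbf{Q}^{-1}\mathbf{z}<\Vert\mathbf{U}^{T}(\mathbf{Y}-\mathbf{A}\mathbf{R})\Vert_{F}^{2}.$$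
   Context: $\mathrm{vec}(\mathbf{X})$ stacks the columns of $\mathbf{X}$; $\otimes$ is the Kronecker product; $\mathrm{blockdiag}(\cdot)$ is the block diagonal matrix with the listed diagonal blocks; $\Vert\cdot\Vert_F$ is the Frobenius norm. *)

theory Defs
  imports "HOL-Analysis.Analysis"
begin

text \<open>vec X stacks the columns of X: index (j,i) = column j, row i.\<close>
definition vecm :: "real^'c^'r \<Rightarrow> real^('c \<times> 'r)" where
  "vecm X = (\<chi> p. X $ snd p $ fst p)"

definition kron :: "real^'c^'r \<Rightarrow> real^'d^'s \<Rightarrow> real^('c \<times> 'd)^('r \<times> 's)" where
  "kron A B = (\<chi> p q. A $ fst p $ fst q * B $ snd p $ snd q)"

definition blockdiag :: "('m::finite \<Rightarrow> real^'b^'b) \<Rightarrow> real^('m \<times> 'b)^('m \<times> 'b)" where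
  "blockdiag S = (\<chi> p q. if fst p = fst q then S (fst p) $ snd p $ snd q else 0)"

definition frob_norm :: "real^'c^'r \<Rightarrow> real" where
  "frob_norm X = sqrt (\<Sum>i\<in>UNIV. \<Sum>j\<in>UNIV. (X $ i $ j)\<^sup>2)"

definition diagonal_mat :: "real^'n^'n \<Rightarrow> bool" where
  "diagonal_mat L \<longleftrightarrow> (\<forall>i j. i \<noteq> j \<longrightarrow> L $ i $ j = 0)"

definition pos_def :: "real^'n^'n \<Rightarrow> bool" where
  "pos_def S \<longleftrightarrow> transpose S = S \<and> (\<forall>x. x \<noteq> 0 \<longrightarrow> x \<bullet> (S *v x) > 0)"

end

theory Submission imports Defs begin

lemma sum_UNIV_pair: "(\<Sum>p\<in>(UNIV::('a::finite\<times>'b::finite) set). f p) = (\<Sum>a\<in>UNIV. \<Sum>b\<in>UNIV. f (a,b))"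
  by (metis UNIV_Times_UNIV sum.cartesian_product')

lemma ifm1: "(if P then (a::real) else 0) * b = (if P then a * b else 0)" by simp
lemma ifm2: "b * (if P then (a::real) else 0) = (if P then b * a else 0)" by simp

lemma kron_mv:
  fixes G :: "real^'m^'m" and X :: "real^'b^'m"
  shows "kron G (mat 1 :: real^'b^'b) *v vecm (transpose X) = vecm (transpose (G ** X))"
  by (simp add: vec_eq_iff kron_def vecm_def matrix_vector_mult_def matrix_matrix_mult_def
        transpose_def mat_def sum_UNIV_pair ifm1 ifm2 sum.delta sum.delta' sum_distrib_left)

lemma kron_KK:
  fixes A :: "real^'m^'n"
  shows "kron (transpose A ** A) (mat 1 :: real^'b^'b) = transpose (kron A (mat 1 :: real^'b^'b)) ** kron A (mat 1)"
  by (simp add: vec_eq_iff kron_def matrix_matrix_mult_def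
        transpose_def mat_def sum_UNIV_pair ifm1 ifm2 sum.delta sum.delta' sum_distrib_left)

lemma vecm_inner:
  fixes M N :: "real^'c^'r"
  shows "vecm M \<bullet> vecm N = (\<Sum>i\<in>UNIV. \<Sum>j\<in>UNIV. M$i$j * N$i$j)"
  apply (simp add: vecm_def inner_vec_def sum_UNIV_pair)
  by (rule sum.swap)

lemma sum_if_c: "(\<Sum>x\<in>A. if P then f x else (0::real)) = (if P then sum f A else 0)" by simp

lemma blockdiag_mv:
  fixes w :: "real^('m::finite \<times> 'b::finite)"
  shows "(blockdiag S *v w) $ (k,b) = (S k *v (\<chi> b. w$(k,b))) $ b"
  by (simp add: blockdiag_def matrix_vector_mult_def sum_UNIV_pair ifm1 ifm2 sum_if_c sum.delta sum.delta')

lemma blockdiag_quad: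
  fixes w :: "real^('m::finite \<times> 'b::finite)"
  shows "w \<bullet> (blockdiag S *v w) = (\<Sum>k\<in>UNIV. (\<chi> b. w$(k,b)) \<bullet> (S k *v (\<chi> b. w$(k,b))))"
  by (simp add: inner_vec_def sum_UNIV_pair blockdiag_mv)


lemma mcancel: "P ** Q = mat 1 \<Longrightarrow> P ** (Q ** C) = (C::real^'a^'b)"
  by (metis matrix_mul_assoc matrix_mul_lid)

lemma inner_transpose_mv:
  fixes K :: "real^'m^'n"
  shows "x \<bullet> (transpose K *v v) = (K *v x) \<bullet> v"
  by (metis dot_lmul_matrix inner_commute transpose_matrix_vector)

theorem mainTheorem6:
  fixes Y :: "real^'b^'n" and R :: "real^'b^'m" and A :: "real^'m^'n"
    and U :: "real^'m^'n" and L :: "real^'m^'m" and V :: "real^'m^'m"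
    and S :: "'m \<Rightarrow> real^'b^'b"
  assumes "invertible (transpose A ** A)"
    and "transpose U ** U = mat 1"
    and "diagonal_mat L" and "\<forall>i. L $ i $ i \<ge> 0"
    and "transpose V ** V = mat 1"
    and "A = U ** L ** transpose V"
    and "\<forall>j. pos_def (S j)"
    and "Q = blockdiag S + kron (transpose A ** A) (mat 1 :: real^'b^'b)"
    and "z = vecm (transpose (Y - A ** R) ** A)"
    and "z \<noteq> 0"
  shows "0 < z \<bullet> (matrix_inv Q *v z)
    \<and> z \<bullet> (matrix_inv Q *v z) < (frob_norm (transpose U ** (Y - A ** R)))\<^sup>2"
proof -
  note invG = assms(1) and UU = assms(2) and VV = assms(5) and Adef = assms(6)
  define E where "E = Y - A ** R"
  define K where "K = kron A (mat 1 :: real^'b^'b)"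
  define P where "P = kron (transpose A ** A) (mat 1 :: real^'b^'b)"
  define D where "D = blockdiag S"
  have hQ: "Q = D + P" using assms(8) by (simp add: D_def P_def)
  have PK: "P = transpose K ** K" by (simp add: P_def K_def kron_KK)
  have Pquad: "w \<bullet> (P *v w) = (K *v w) \<bullet> (K *v w)" for w
    by (metis PK inner_transpose_mv matrix_vector_mul_assoc)
  have Psd: "w \<bullet> (P *v w) \<ge> 0" for w using Pquad by simp
  have Psym: "u \<bullet> (P *v w) = w \<bullet> (P *v u)" for u w
    by (metis PK inner_transpose_mv matrix_vector_mul_assoc inner_commute)
  have Dpos: "w \<bullet> (D *v w) > 0" if "w \<noteq> 0" for w
  proof -
    obtain k b where kb: "w $ (k,b) \<noteq> 0" using \<open>w \<noteq> 0\<close>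
      by (metis vec_eq_iff zero_index surj_pair)
    have nz: "(\<chi> b. w$(k,b)) \<noteq> 0" using kb by (metis vec_lambda_beta zero_index)
    have pos: "\<And>v. v \<noteq> 0 \<Longrightarrow> v \<bullet> (S j *v v) > 0" for j
      using assms(7) unfolding pos_def_def by blast
    have "0 < (\<Sum>k\<in>UNIV. (\<chi> b. w$(k,b)) \<bullet> (S k *v (\<chi> b. w$(k,b))))"
    proof (rule sum_pos2[where i=k])
      show "0 < (\<chi> b. w$(k,b)) \<bullet> (S k *v (\<chi> b. w$(k,b)))" using pos nz by blast
      fix j
      show "0 \<le> (\<chi> b. w$(j,b)) \<bullet> (S j *v (\<chi> b. w$(j,b)))"
        using pos[of "(\<chi> b. w$(j,b))" j] by (cases "(\<chi> b. w$(j,b)) = 0") auto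
    qed auto
    then show ?thesis by (simp add: D_def blockdiag_quad)
  qed
  have Qpos: "w \<bullet> (Q *v w) > 0" if "w \<noteq> 0" for w
    using Dpos[OF that] Psd[of w] by (simp add: hQ matrix_vector_mult_add_rdistrib inner_add_right)
  have "\<forall>w. Q *v w = 0 \<longrightarrow> w = 0" using Qpos by (metis inner_zero_right less_irrefl)
  then have invQ: "invertible Q"
    using matrix_left_invertible_ker invertible_left_inverse by blast
  have QQi: "Q ** matrix_inv Q = mat 1"
    using invQ unfolding invertible_def matrix_inv_def by (metis (mono_tags, lifting) someI_ex)
  define x where "x = matrix_inv Q *v z"
  have Qx: "Q *v x = z" by (simp add: x_def matrix_vector_mul_assoc QQi)
  have xnz: "x \<noteq> 0" using Qx assms(10) by auto
  have zx: "z \<bullet> x = x \<bullet> (Q *v x)" using Qx by (simp add: inner_commute)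
  have pos: "0 < z \<bullet> x" using zx Qpos[OF xnz] by simp
  have tA: "transpose A = V ** (transpose L ** transpose U)"
    by (simp add: Adef matrix_transpose_mul matrix_mul_assoc)
  have Ar: "A = U ** (L ** transpose V)" by (simp add: Adef matrix_mul_assoc)
  have G: "transpose A ** A = V ** (transpose L ** (L ** transpose V))"
    by (subst tA) (simp add: Ar matrix_mul_assoc[symmetric] mcancel[OF UU])
  have "det L \<noteq> 0"
    using invG by (simp add: G invertible_det_nz det_mul)
  then have invL: "invertible L" by (simp add: invertible_det_nz)
  define Li where "Li = matrix_inv L"
  have LLi: "L ** Li = mat 1"
    using invL unfolding invertible_def matrix_inv_def Li_def by (metis (mono_tags, lifting) someI_ex)
  define X where "X = V ** (Li ** (transpose U ** E))"
  define y where "y = vecm (transpose X)"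
  have GX: "transpose A ** A ** X = transpose A ** E"
    by (subst G, subst tA, simp add: X_def matrix_mul_assoc[symmetric] mcancel[OF UU] mcancel[OF VV] mcancel[OF LLi])
  have zE: "z = vecm (transpose (transpose A ** E))"
    by (simp add: assms(9) E_def matrix_transpose_mul)
  have Py: "P *v y = z" by (simp add: P_def y_def kron_mv GX zE)
  have "0 \<le> (x - y) \<bullet> (P *v (x - y))" by (rule Psd)
  also have "\<dots> = x \<bullet> (P *v x) - 2 * (x \<bullet> z) + y \<bullet> z"
    using Psym[of x y] Py
    by (simp add: matrix_vector_mult_diff_distrib inner_diff_left inner_diff_right)
  finally have ineq: "2 * (x \<bullet> z) - x \<bullet> (P *v x) \<le> y \<bullet> z" by simp
  have "x \<bullet> (Q *v x) = x \<bullet> (D *v x) + x \<bullet> (P *v x)"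
    by (simp add: hQ matrix_vector_mult_add_rdistrib inner_add_right)
  with ineq zx Dpos[OF xnz] have lt: "z \<bullet> x < z \<bullet> y" by (simp add: inner_commute)
  define W where "W = transpose U ** E"
  have EAX: "transpose E ** A ** X = transpose W ** W"
    by (simp add: Ar X_def W_def matrix_transpose_mul matrix_mul_assoc[symmetric] mcancel[OF VV] mcancel[OF LLi])
  have "z \<bullet> y = (\<Sum>b\<in>UNIV. (transpose E ** A ** X) $ b $ b)"
    by (simp add: zE y_def vecm_inner matrix_matrix_mult_def transpose_def matrix_transpose_mul mult.commute)
  also have "\<dots> = (\<Sum>b\<in>UNIV. \<Sum>i\<in>UNIV. (W $ i $ b)\<^sup>2)"
    by (simp only: EAX) (simp add: matrix_matrix_mult_def transpose_def power2_eq_square)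
  also have "\<dots> = (frob_norm W)\<^sup>2"
  proof -
    have "(frob_norm W)\<^sup>2 = (\<Sum>i\<in>UNIV. \<Sum>j\<in>UNIV. (W $ i $ j)\<^sup>2)"
      unfolding frob_norm_def by (rule real_sqrt_pow2) (simp add: sum_nonneg)
    then show ?thesis using sum.swap[of "\<lambda>i j. (W $ i $ j)\<^sup>2" UNIV UNIV] by simp
  qed
  finally have zy: "z \<bullet> y = (frob_norm W)\<^sup>2" .
  show ?thesis using pos lt zy by (simp add: x_def W_def E_def)
qed

end
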